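(* The invariant probability $\mu$ of the kernel $M$ has no atom; in particular $\mu(\{0\})=0$.
   Context: $M$ is the Markov kernel $M(x,\cdot)=\frac16\sum_{i=1}^6\delta_{z_i(x)}$ on $[0,1/2]$, where for $x\in[0,1/2]$: $z_1(x)=\frac{3x}{2+2x}$; $z_2(x)=\frac{3x}{2-x}$ if $x<2/7$ and $\frac{2-4x}{2-x}$ if $x\ge2/7$; $z_3(x)=\frac{1+x}{3-3x}$ if $x<1/5$ and $\frac{2-4x}{3-3x}$ if $x\ge1/5$; $z_4(x)=\frac{1+x}{4-2x}$; $z_5(x)=\frac{1-2x}{4-2x}$; $z_6(x)=\frac{1-2x}{3}$. $M$ has a unique invariant probability measure, denoted $\mu$. *)

theory Defs
  imports "HOL-Probability.Probability"
begin

definition zmap :: "nat \<Rightarrow> real \<Rightarrow> real" where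
  "zmap i x =
    (if i = 1 then 3 * x / (2 + 2 * x)
     else if i = 2 then (if x < 2/7 then 3 * x / (2 - x) else (2 - 4 * x) / (2 - x))
     else if i = 3 then (if x < 1/5 then (1 + x) / (3 - 3 * x) else (2 - 4 * x) / (3 - 3 * x))
     else if i = 4 then (1 + x) / (4 - 2 * x)
     else if i = 5 then (1 - 2 * x) / (4 - 2 * x)
     else (1 - 2 * x) / 3)"

definition kernelM :: "real \<Rightarrow> real set \<Rightarrow> real" where
  "kernelM x A = (1/6) * (\<Sum>i\<in>{1..6::nat}. indicator A (zmap i x))"

definition state_space :: "real measure" where
  "state_space = restrict_space borel {0..1/2}"

definition M_invariant_prob :: "real measure \<Rightarrow> bool" where
  "M_invariant_prob \<mu> \<longleftrightarrow>
     prob_space \<mu> \<and> sets \<mu> = sets state_space \<and>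
     (\<forall>A\<in>sets \<mu>. emeasure \<mu> A = (\<integral>\<^sup>+ x. ennreal (kernelM x A) \<partial>\<mu>))"

end

theory Submission
  imports Defs
begin

locale invm =
  fixes \<mu> :: "real measure"
  assumes inv: "M_invariant_prob \<mu>"
begin

lemma ps: "prob_space \<mu>" using inv unfolding M_invariant_prob_def by auto

lemma fm: "finite_measure \<mu>" using ps by (simp add: prob_space_def)

lemma sets_mu: "sets \<mu> = sets (restrict_space borel {0..1/2::real})"
  using inv unfolding M_invariant_prob_def state_space_def by auto

lemma space_mu: "space \<mu> = {0..1/2}"
  using sets_eq_imp_space_eq[OF sets_mu] by (simp add: space_restrict_space)

lemma sing_sets: "x \<in> {0..1/2} \<Longrightarrow> {x} \<in> sets \<mu>"
  unfolding sets_mu by (subst sets_restrict_space_iff) auto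

lemma int_sets: "{c} \<inter> {0..1/2} \<in> sets \<mu>"
  by (cases "c \<in> {0..1/2}") (auto simp: sing_sets)

definition a :: "real \<Rightarrow> real" where "a x = measure \<mu> {x}"

lemma a_nonneg: "a x \<ge> 0" unfolding a_def by simp

lemma a_out: "x \<notin> {0..1/2} \<Longrightarrow> a x = 0"
  unfolding a_def
proof -
  assume "x \<notin> {0..1/2}"
  then have "{x} \<notin> sets \<mu>" using sets.sets_into_space[of "{x}" \<mu>] space_mu by auto
  then show "measure \<mu> {x} = 0" by (simp add: measure_notin_sets)
qed

lemma meas_int: "measure \<mu> ({c} \<inter> {0..1/2}) = a c"
  by (cases "c \<in> {0..1/2}") (use a_out[of c] in \<open>auto simp: a_def\<close>)

lemma emeas_a: "emeasure \<mu> ({c} \<inter> {0..1/2}) = ennreal (a c)"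
  using finite_measure.emeasure_eq_measure[OF fm] meas_int by simp

lemma sum_le1:
  assumes "finite F" "F \<subseteq> {0..1/2}"
  shows "(\<Sum>x\<in>F. a x) \<le> 1"
proof -
  have "measure \<mu> F = (\<Sum>x\<in>F. a x)"
    unfolding a_def
    by (rule measure_eq_sum_singleton) (use assms sing_sets finite_measure.emeasure_finite[OF fm] in auto)
  moreover have "measure \<mu> F \<le> 1" using prob_space.prob_le_1[OF ps] by simp
  ultimately show ?thesis by simp
qed

lemma finite_big:
  assumes e: "e > 0"
  shows "finite {x. a x \<ge> e}"
proof (rule ccontr)
  assume "\<not> finite {x. a x \<ge> e}"
  obtain n :: nat where n: "real n * e > 1" using reals_Archimedean3[OF e] by auto
  obtain B where B: "finite B" "card B = n" "B \<subseteq> {x. a x \<ge> e}"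
    using infinite_arbitrarily_large[OF \<open>\<not> finite _\<close>] by blast
  have "B \<subseteq> {0..1/2}" using B(3) e a_out by force
  then have "(\<Sum>x\<in>B. a x) \<le> 1" using sum_le1 B by auto
  moreover have "(\<Sum>x\<in>B. e) \<le> (\<Sum>x\<in>B. a x)" using B by (intro sum_mono) auto
  ultimately show False using B n by (simp add: mult.commute)
qed

definition S :: "bool \<Rightarrow> real \<Rightarrow> real set" where
  "S b c = (if b then {c} \<inter> {0..1/2} else {})"

lemma S_sets: "S b c \<in> sets \<mu>"
  unfolding S_def using int_sets by auto

lemma meas_S: "measure \<mu> (S b c) = (if b then a c else 0)"
  unfolding S_def using meas_int by auto

definition g :: "real \<Rightarrow> real \<Rightarrow> real" where
  "g y x = (1/6) * (indicator (S True (2*y/(3-2*y))) x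
     + indicator (S (2*y/(3+y) < 2/7) (2*y/(3+y))) x
     + indicator (S (2/7 \<le> (2-2*y)/(4-y)) ((2-2*y)/(4-y))) x
     + indicator (S ((3*y-1)/(3*y+1) < 1/5) ((3*y-1)/(3*y+1))) x
     + indicator (S (1/5 \<le> (2-3*y)/(4-3*y)) ((2-3*y)/(4-3*y))) x
     + indicator (S True ((4*y-1)/(1+2*y))) x
     + indicator (S True ((1-4*y)/(2-2*y))) x
     + indicator (S True ((1-3*y)/2)) x)"

lemma iS: "integrable \<mu> (\<lambda>x. indicat_real (S b c) x)"
  using S_sets finite_measure.emeasure_finite[OF fm] by (intro integrable_real_indicator) (auto simp: less_top)

lemma intS: "(LINT x|\<mu>. indicat_real (S b c) x) = (if b then a c else 0)"
  using S_sets meas_S by simp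

lemma measS2: "measure \<mu> (S b c \<inter> space \<mu>) = (if b then a c else 0)"
  using meas_S[of b c] space_mu by (simp add: S_def Int_absorb2)

lemma int_g: "integrable \<mu> (g y)"
  unfolding g_def by (simp add: iS)

lemma integral_g: "(\<integral>x. g y x \<partial>\<mu>) = (1/6) * (
       (if True then a (2*y/(3-2*y)) else 0)
     + (if 2*y/(3+y) < 2/7 then a (2*y/(3+y)) else 0)
     + (if 2/7 \<le> (2-2*y)/(4-y) then a ((2-2*y)/(4-y)) else 0)
     + (if (3*y-1)/(3*y+1) < 1/5 then a ((3*y-1)/(3*y+1)) else 0)
     + (if 1/5 \<le> (2-3*y)/(4-3*y) then a ((2-3*y)/(4-3*y)) else 0)
     + (if True then a ((4*y-1)/(1+2*y)) else 0)
     + (if True then a ((1-4*y)/(2-2*y)) else 0)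
     + (if True then a ((1-3*y)/2) else 0))"
  unfolding g_def
  by (simp add: iS measS2)

lemma indS_nn: "0 \<le> indicat_real A x" by (simp add: indicator_def)

lemma p1: assumes "0\<le>x" "x\<le>1/2"
  shows "indicat_real {y} (zmap 1 x) \<le> indicator (S True (2*y/(3-2*y))) x"
proof (cases "zmap 1 x = y")
  case True
  hence y: "y = 3*x/(2+2*x)" by (simp add: zmap_def)
  have "2*y/(3-2*y) = x" unfolding y using assms by (simp add: field_simps)
  thus ?thesis using assms by (simp add: S_def)
qed (simp add: indS_nn)

lemma p2: assumes "0\<le>x" "x\<le>1/2"
  shows "indicat_real {y} (zmap 2 x) \<le> indicator (S (2*y/(3+y) < 2/7) (2*y/(3+y))) x
     + indicator (S (2/7 \<le> (2-2*y)/(4-y)) ((2-2*y)/(4-y))) x"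
proof (cases "zmap 2 x = y")
  case True
  show ?thesis
  proof (cases "x < 2/7")
    case c: True
    hence y: "y = 3*x/(2-x)" using True by (simp add: zmap_def)
    have "2*y/(3+y) = x" unfolding y using assms c by (simp add: field_simps)
    thus ?thesis using assms c by (auto simp: S_def indicator_def)
  next
    case c: False
    hence y: "y = (2-4*x)/(2-x)" using True by (simp add: zmap_def)
    have "(2-2*y)/(4-y) = x" unfolding y using assms c by (simp add: field_simps)
    thus ?thesis using assms c by (auto simp: S_def indicator_def)
  qed
qed (simp add: indS_nn add_nonneg_nonneg)

lemma p3: assumes "0\<le>x" "x\<le>1/2"
  shows "indicat_real {y} (zmap 3 x) \<le> indicator (S ((3*y-1)/(3*y+1) < 1/5) ((3*y-1)/(3*y+1))) x
     + indicator (S (1/5 \<le> (2-3*y)/(4-3*y)) ((2-3*y)/(4-3*y))) x"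
proof (cases "zmap 3 x = y")
  case True
  show ?thesis
  proof (cases "x < 1/5")
    case c: True
    hence y: "y = (1+x)/(3-3*x)" using True by (simp add: zmap_def)
    have "(3*y-1)/(3*y+1) = x" unfolding y using assms c by (simp add: field_simps)
    thus ?thesis using assms c by (auto simp: S_def indicator_def)
  next
    case c: False
    hence y: "y = (2-4*x)/(3-3*x)" using True by (simp add: zmap_def)
    have "(2-3*y)/(4-3*y) = x" unfolding y using assms c by (simp add: field_simps)
    thus ?thesis using assms c by (auto simp: S_def indicator_def)
  qed
qed (simp add: indS_nn add_nonneg_nonneg)

lemma p4: assumes "0\<le>x" "x\<le>1/2"
  shows "indicat_real {y} (zmap 4 x) \<le> indicator (S True ((4*y-1)/(1+2*y))) x"
proof (cases "zmap 4 x = y")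
  case True
  hence y: "y = (1+x)/(4-2*x)" by (simp add: zmap_def)
  have "(4*y-1)/(1+2*y) = x" unfolding y using assms by (simp add: field_simps)
  thus ?thesis using assms by (simp add: S_def)
qed (simp add: indS_nn)

lemma p5: assumes "0\<le>x" "x\<le>1/2"
  shows "indicat_real {y} (zmap 5 x) \<le> indicator (S True ((1-4*y)/(2-2*y))) x"
proof (cases "zmap 5 x = y")
  case True
  hence y: "y = (1-2*x)/(4-2*x)" by (simp add: zmap_def)
  have "(1-4*y)/(2-2*y) = x" unfolding y using assms by (simp add: field_simps)
  thus ?thesis using assms by (simp add: S_def)
qed (simp add: indS_nn)

lemma p6: assumes "0\<le>x" "x\<le>1/2"
  shows "indicat_real {y} (zmap 6 x) \<le> indicator (S True ((1-3*y)/2)) x"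
proof (cases "zmap 6 x = y")
  case True
  hence y: "y = (1-2*x)/3" by (simp add: zmap_def)
  have "(1-3*y)/2 = x" unfolding y using assms by (simp add: field_simps)
  thus ?thesis using assms by (simp add: S_def)
qed (simp add: indS_nn)

lemma sum6: "(\<Sum>i\<in>{1..6::nat}. f i) = f 1 + f 2 + f 3 + f 4 + f 5 + (f 6 :: real)"
  by (simp add: eval_nat_numeral atLeastAtMostSuc_conv)

lemma kernel_le: assumes "0\<le>x" "x\<le>1/2"
  shows "kernelM x {y} \<le> g y x"
  unfolding kernelM_def g_def sum6
  using p1[OF assms, of y] p2[OF assms, of y] p3[OF assms, of y] p4[OF assms, of y]
     p5[OF assms, of y] p6[OF assms, of y]
  by (intro mult_left_mono) (linarith, simp)

lemma key: assumes y: "0 \<le> y" "y \<le> 1/2"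
  shows "a y \<le> (1/6) * (
       (if True then a (2*y/(3-2*y)) else 0)
     + (if 2*y/(3+y) < 2/7 then a (2*y/(3+y)) else 0)
     + (if 2/7 \<le> (2-2*y)/(4-y) then a ((2-2*y)/(4-y)) else 0)
     + (if (3*y-1)/(3*y+1) < 1/5 then a ((3*y-1)/(3*y+1)) else 0)
     + (if 1/5 \<le> (2-3*y)/(4-3*y) then a ((2-3*y)/(4-3*y)) else 0)
     + (if True then a ((4*y-1)/(1+2*y)) else 0)
     + (if True then a ((1-4*y)/(2-2*y)) else 0)
     + (if True then a ((1-3*y)/2) else 0))"
proof -
  have ys: "{y} \<in> sets \<mu>" using sing_sets y by auto
  have "ennreal (a y) = emeasure \<mu> {y}"
    unfolding a_def using finite_measure.emeasure_eq_measure[OF fm] by simp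
  also have "\<dots> = (\<integral>\<^sup>+ x. ennreal (kernelM x {y}) \<partial>\<mu>)"
    using inv ys unfolding M_invariant_prob_def by auto
  also have "\<dots> \<le> (\<integral>\<^sup>+ x. ennreal (g y x) \<partial>\<mu>)"
    by (intro nn_integral_mono ennreal_leI) (use kernel_le space_mu in auto)
  also have "\<dots> = ennreal (\<integral>x. g y x \<partial>\<mu>)"
    by (intro nn_integral_eq_integral int_g) (auto simp: g_def)
  finally have le: "ennreal (a y) \<le> ennreal (\<integral>x. g y x \<partial>\<mu>)" .
  have nn: "0 \<le> (\<integral>x. g y x \<partial>\<mu>)" by (intro integral_nonneg_AE) (auto simp: g_def)
  have "a y \<le> (\<integral>x. g y x \<partial>\<mu>)" using le ennreal_le_iff[OF nn] by simp
  then show ?thesis unfolding integral_g .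
qed

lemma lin: "(ay::real) \<le> 1/6*(t0+ac+t2+t3+t4+t5+t6+t7) \<Longrightarrow> ay = m \<Longrightarrow> t3+t7 \<le> m \<Longrightarrow>
   t5+t6 \<le> m \<Longrightarrow> t0 \<le> m \<Longrightarrow> t2 \<le> m \<Longrightarrow> t4 \<le> m \<Longrightarrow> m \<le> ac" by (simp add: field_simps)

lemma if_le: "(\<And>x. a x \<le> m) \<Longrightarrow> 0 \<le> m \<Longrightarrow> (if b then a c else 0) \<le> m" by auto

lemma no_atoms: "a p = 0"
proof (rule ccontr)
  assume "a p \<noteq> 0"
  then have ap: "a p > 0" using a_nonneg[of p] by simp
  define B where "B = {x. a x \<ge> a p}"
  have finB: "finite B" unfolding B_def using finite_big[OF ap] .
  have pB: "p \<in> B" unfolding B_def by simp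
  define m where "m = Max (a ` B)"
  have mB: "m \<in> a ` B" unfolding m_def using finB pB by (intro Max_in) auto
  have amax: "a x \<le> m" for x
  proof (cases "x \<in> B")
    case True then show ?thesis unfolding m_def using finB by auto
  next
    case False
    then have "a x < a p" unfolding B_def by auto
    moreover have "a p \<le> m" unfolding m_def using finB pB by auto
    ultimately show ?thesis by simp
  qed
  have mpos: "m > 0" using amax[of p] ap by simp
  define A where "A = {x. a x = m}"
  have finA: "finite A"
    by (rule finite_subset[OF _ finB]) (use amax[of p] ap mB in \<open>auto simp: A_def B_def\<close>)
  have neA: "A \<noteq> {}" using mB unfolding A_def by auto
  define y where "y = Min A"
  have yA: "y \<in> A" unfolding y_def using finA neA by (rule Min_in)
  have ymin: "\<And>z. z \<in> A \<Longrightarrow> y \<le> z" unfolding y_def using finA by auto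
  have ay: "a y = m" using yA unfolding A_def by simp
  have yr: "0 \<le> y" "y \<le> 1/2" using a_out[of y] ay mpos by auto
  have h1: "a (1/2) \<le> m/2"
    using key[of "1/2"] a_out[of "-1"] a_out[of "-1/4"] amax[of "2/7"] amax[of "1/5"]
    by simp
  have h0: "a 0 \<le> m/2"
    using key[of 0] a_out[of "-1"] h1 by simp
  have y0: "0 < y" using yr ay h0 mpos by (cases "y = 0") auto
  have y1: "y < 1/2" using yr ay h1 mpos by (cases "y = 1/2") auto
  define c where "c = 2*y/(3+y)"
  have c27: "c < 2/7" unfolding c_def using y0 y1 by (simp add: field_simps)
  have cy: "c < y" unfolding c_def using y0 y1 by (simp add: field_simps add_pos_pos)
  have T37: "(if (3*y-1)/(3*y+1) < 1/5 then a ((3*y-1)/(3*y+1)) else 0) + a ((1-3*y)/2) \<le> m"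
  proof -
    consider "y < 1/3" | "y = 1/3" | "y > 1/3" by linarith
    then show ?thesis
    proof cases
      case 1
      then have "(3*y-1)/(3*y+1) < 0" using y0 by (simp add: divide_neg_pos)
      then show ?thesis using a_out[of "(3*y-1)/(3*y+1)"] amax[of "(1-3*y)/2"] by simp
    next
      case 2
      have e: "(3*y-1)/(3*y+1) = 0" "(1-3*y)/2 = 0" using 2 by simp_all
      show ?thesis unfolding e using h0 by simp
    next
      case 3
      then have "(1-3*y)/2 < 0" by simp
      then show ?thesis using a_out[of "(1-3*y)/2"] amax[of "(3*y-1)/(3*y+1)"] mpos by simp
    qed
  qed
  have T56: "a ((4*y-1)/(1+2*y)) + a ((1-4*y)/(2-2*y)) \<le> m"
  proof -
    consider "y < 1/4" | "y = 1/4" | "y > 1/4" by linarith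
    then show ?thesis
    proof cases
      case 1
      then have "(4*y-1)/(1+2*y) < 0" using y0 by (simp add: divide_neg_pos)
      then show ?thesis using a_out[of "(4*y-1)/(1+2*y)"] amax[of "(1-4*y)/(2-2*y)"] by simp
    next
      case 2
      have e: "(4*y-1)/(1+2*y) = 0" "(1-4*y)/(2-2*y) = 0" using 2 by simp_all
      show ?thesis unfolding e using h0 by simp
    next
      case 3
      then have "(1-4*y)/(2-2*y) < 0" using y1 by (simp add: divide_neg_pos)
      then show ?thesis using a_out[of "(1-4*y)/(2-2*y)"] amax[of "(4*y-1)/(1+2*y)"] by simp
    qed
  qed
  have k: "a y \<le> (1/6) * (a (2*y/(3-2*y)) + a c
     + (if 2/7 \<le> (2-2*y)/(4-y) then a ((2-2*y)/(4-y)) else 0)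
     + (if (3*y-1)/(3*y+1) < 1/5 then a ((3*y-1)/(3*y+1)) else 0)
     + (if 1/5 \<le> (2-3*y)/(4-3*y) then a ((2-3*y)/(4-3*y)) else 0)
     + a ((4*y-1)/(1+2*y)) + a ((1-4*y)/(2-2*y)) + a ((1-3*y)/2))"
    using key[OF yr] c27 unfolding c_def by simp
  have "a c \<ge> m"
    apply (rule lin[OF k ay])
    using T37 T37 T56 amax[of "2*y/(3-2*y)"]
      if_le[OF amax, of "2/7 \<le> (2-2*y)/(4-y)" "(2-2*y)/(4-y)", OF less_imp_le[OF mpos]]
      if_le[OF amax, of "1/5 \<le> (2-3*y)/(4-3*y)" "(2-3*y)/(4-3*y)", OF less_imp_le[OF mpos]] mpos
    by simp_all
  then have "c \<in> A" using amax[of c] unfolding A_def by simp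
  then show False using ymin cy by force
qed

end

theorem lemma16:
  fixes \<mu> :: "real measure"
  assumes "M_invariant_prob \<mu>"
  shows "(\<forall>x. emeasure \<mu> {x} = 0) \<and> emeasure \<mu> {0} = 0"
proof -
  interpret invm \<mu> using assms by unfold_locales
  have "emeasure \<mu> {x} = 0" for x
    using finite_measure.emeasure_eq_measure[OF fm, of "{x}"] no_atoms[of x] unfolding a_def by simp
  then show ?thesis by simp
qed

end
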